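(* Let $d\ge46$. The number of finite strictly increasing sequences of positive integers $h_1<\dots<h_k$ ($k\ge1$) satisfying $h_1\ge7$, $h_k=d+k+1$ and $h_{i+1}-h_i\ge6$ for all $i$ (equivalently, the number of $d$-dimensional lattices $L_d(h_1,\dots,h_k)$ satisfying these conditions) equals $\alpha(d-8)$.
   Context: For a strictly increasing sequence of positive integers $h_1<h_2<\dots$ and $d\ge1$, $L_d(h_1,h_2,\dots)=\{x\in\mathbb Z^{d+2}:\sum_ix_i=0,\ \sum_is_ix_i=0\}$ where $s_1<\dots<s_{d+2}$ are the $d+2$ smallest elements of $\{1,2,\dots\}\setminus\{h_1,h_2,\dots\}$. For $n\ge1$, $\alpha(n)$ is the number of strictly increasing integer sequences $s_1=1<s_2<\dots<s_n$ with $s_{i+1}-s_i\in\{1,2\}$ for all $i$ and such that whenever $1\le i<j\le n-1$ with $s_{i+1}-s_i=s_{j+1}-s_j=2$ one has $s_j-s_i\ge6$; it satisfies $\alpha(n)=n$ for $n\le6$ and $\alpha(n)=\alpha(n-1)+\alpha(n-5)$ for $n\ge6$. *)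

theory Defs
  imports Main
begin

definition alpha :: "nat \<Rightarrow> nat" where
  "alpha n = card {s :: nat list. length s = n \<and> s ! 0 = 1 \<and>
     (\<forall>i. Suc i < n \<longrightarrow> s ! Suc i - s ! i \<in> {1, 2}) \<and>
     (\<forall>i j. i < j \<and> Suc j < n \<and> s ! Suc i - s ! i = 2 \<and> s ! Suc j - s ! j = 2
        \<longrightarrow> s ! j - s ! i \<ge> 6)}"

definition admissible_seqs :: "nat \<Rightarrow> nat list set" where
  "admissible_seqs d = {hs. hs \<noteq> [] \<and> sorted_wrt (<) hs \<and> hd hs \<ge> 7 \<and>
     last hs = d + length hs + 1 \<and>
     (\<forall>i. Suc i < length hs \<longrightarrow> hs ! Suc i - hs ! i \<ge> 6)}"

end

theory Submission
  imports Defs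
begin

definition Q :: "nat \<Rightarrow> nat list set" where
  "Q m = {xs. sorted_wrt (\<lambda>x y. x + 5 \<le> y) xs \<and> (\<forall>x\<in>set xs. x < m)}"

lemma gaps_nth:
  assumes g: "\<forall>i. Suc i < length hs \<longrightarrow> hs!i + c \<le> hs!Suc i" and "p \<le> q" and "q < length hs"
  shows "hs!p + c*(q-p) \<le> hs!q"
proof -
  have "q < length hs \<longrightarrow> hs!p + c*(q-p) \<le> hs!q" using \<open>p\<le>q\<close>
  proof (induction q rule: dec_induct)
    case base then show ?case by simp
  next
    case (step n)
    show ?case
    proof
      assume "Suc n < length hs"
      then have "hs!p + c*(n-p) \<le> hs!n" "hs!n + c \<le> hs!Suc n" using step g by auto
      moreover have "c*(Suc n - p) = c*(n-p) + c" using step(1) by (simp add: Suc_diff_le)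
      ultimately show "hs!p + c*(Suc n-p) \<le> hs!Suc n" by linarith
    qed
  qed
  then show ?thesis using assms by blast
qed

lemma adm_D:
  assumes "hs \<in> admissible_seqs d"
  shows "hs \<noteq> []" "\<forall>i. Suc i < length hs \<longrightarrow> hs!i + 6 \<le> hs!Suc i"
    "hs!0 \<ge> 7" "hs!(length hs - 1) = d + length hs + 1"
proof -
  show ne: "hs \<noteq> []" using assms unfolding admissible_seqs_def by auto
  show "\<forall>i. Suc i < length hs \<longrightarrow> hs!i + 6 \<le> hs!Suc i"
  proof (intro allI impI)
    fix i assume i: "Suc i < length hs"
    then have "hs!i < hs!Suc i" using assms unfolding admissible_seqs_def
      by (auto simp: sorted_wrt_iff_nth_less)
    moreover have "hs ! Suc i - hs ! i \<ge> 6" using assms i unfolding admissible_seqs_def by auto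
    ultimately show "hs!i + 6 \<le> hs!Suc i" by linarith
  qed
  show "hs!0 \<ge> 7" using assms ne unfolding admissible_seqs_def by (auto simp: hd_conv_nth)
  show "hs!(length hs - 1) = d + length hs + 1"
    using assms ne unfolding admissible_seqs_def by (auto simp: last_conv_nth)
qed

lemma adm_I:
  assumes "hs \<noteq> []" "\<forall>i. Suc i < length hs \<longrightarrow> hs!i + 6 \<le> hs!Suc i"
    "hs!0 \<ge> 7" "hs!(length hs - 1) = d + length hs + 1"
  shows "hs \<in> admissible_seqs d"
proof -
  have "sorted_wrt (<) hs"
    unfolding sorted_wrt_iff_nth_less
  proof (intro allI impI)
    fix i j assume "i < j" "j < length hs"
    then have "hs!i + 6*(j-i) \<le> hs!j" using gaps_nth[OF assms(2)] by simp
    then show "hs!i < hs!j" using \<open>i<j\<close> by simp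
  qed
  then show ?thesis using assms unfolding admissible_seqs_def
    by (auto simp: hd_conv_nth last_conv_nth)
qed

lemma adm_card:
  assumes d: "d \<ge> 9"
  shows "card (admissible_seqs d) = card (Q (d-9))"
proof -
  define g where "g hs = map (\<lambda>i. hs!i - i - 7) [0..<length hs - 1]" for hs :: "nat list"
  define g' where "g' xs = map (\<lambda>i. xs!i + i + 7) [0..<length xs] @ [d + length xs + 2]"
    for xs :: "nat list"
  have low: "hs!i \<ge> 7 + 6*i" if "hs \<in> admissible_seqs d" "i < length hs" for hs i
    using gaps_nth[OF adm_D(2)[OF that(1)], of 0 i] adm_D(3)[OF that(1)] that(2) by simp
  have up: "hs!i + 6*(length hs - 1 - i) \<le> d + length hs + 1"
    if "hs \<in> admissible_seqs d" "i < length hs" for hs i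
    using gaps_nth[OF adm_D(2)[OF that(1)], of i "length hs - 1"] adm_D(4)[OF that(1)] that(2)
    by simp
  have "bij_betw g (admissible_seqs d) (Q (d-9))"
  proof (rule bij_betw_byWitness[where f'=g'])
    show "\<forall>a\<in>admissible_seqs d. g' (g a) = a"
    proof
      fix hs assume hs: "hs \<in> admissible_seqs d"
      note ne = adm_D(1)[OF hs]
      show "g' (g hs) = hs"
      proof (rule nth_equalityI)
        show "length (g' (g hs)) = length hs" using ne by (simp add: g_def g'_def)
        fix i assume "i < length (g' (g hs))"
        then have i: "i < length hs" using ne by (simp add: g_def g'_def)
        show "g' (g hs) ! i = hs ! i"
        proof (cases "i < length hs - 1")
          case True
          then show ?thesis using low[OF hs i] by (simp add: g_def g'_def nth_append)
        next
          case False
          then have "i = length hs - 1" using i by simp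
          then show ?thesis using adm_D(4)[OF hs] ne
            by (simp add: g_def g'_def nth_append)
        qed
      qed
    qed
    show "\<forall>a\<in>Q (d-9). g (g' a) = a"
      by (auto simp: g_def g'_def nth_append intro!: nth_equalityI)
    show "g ` admissible_seqs d \<subseteq> Q (d-9)"
    proof
      fix xs assume "xs \<in> g ` admissible_seqs d"
      then obtain hs where hs: "hs \<in> admissible_seqs d" and xs: "xs = g hs" by auto
      have "sorted_wrt (\<lambda>x y. x + 5 \<le> y) xs"
        unfolding sorted_wrt_iff_nth_less
      proof (intro allI impI)
        fix p q assume pq: "p < q" "q < length xs"
        then have q: "q < length hs" using xs by (simp add: g_def)
        have "hs!p + 6*(q-p) \<le> hs!q" using gaps_nth[OF adm_D(2)[OF hs], of p q] pq q by simp
        moreover have "hs!p \<ge> 7 + 6*p" using low[OF hs] pq q by simp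
        ultimately show "xs!p + 5 \<le> xs!q" using pq xs by (simp add: g_def)
      qed
      moreover have "\<forall>x\<in>set xs. x < d - 9"
      proof
        fix x assume "x \<in> set xs"
        then obtain i where i: "i < length hs - 1" "x = hs!i - i - 7"
          using xs by (auto simp: g_def)
        have "hs!i + 6*(length hs - 1 - i) \<le> d + length hs + 1" using up[OF hs] i by simp
        moreover have "hs!i \<ge> 7 + 6*i" using low[OF hs] i by simp
        ultimately show "x < d - 9" using i d by (simp add: algebra_simps)
      qed
      ultimately show "xs \<in> Q (d-9)" by (simp add: Q_def)
    qed
    show "g' ` Q (d-9) \<subseteq> admissible_seqs d"
    proof
      fix hs assume "hs \<in> g' ` Q (d-9)"
      then obtain xs where xs: "xs \<in> Q (d-9)" and hs: "hs = g' xs" by auto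
      have sw: "xs!i + 5 \<le> xs!j" if "i < j" "j < length xs" for i j
        using xs that by (simp add: Q_def sorted_wrt_iff_nth_less)
      have lt: "xs!i < d - 9" if "i < length xs" for i
        using xs that by (simp add: Q_def)
      show "hs \<in> admissible_seqs d"
      proof (rule adm_I)
        show "hs \<noteq> []" using hs by (simp add: g'_def)
        show "\<forall>i. Suc i < length hs \<longrightarrow> hs!i + 6 \<le> hs!Suc i"
        proof (intro allI impI)
          fix i assume i: "Suc i < length hs"
          show "hs!i + 6 \<le> hs!Suc i"
          proof (cases "Suc i < length xs")
            case True
            then show ?thesis using sw[of i "Suc i"] hs by (simp add: g'_def nth_append)
          next
            case False
            then have "Suc i = length xs" using i hs by (simp add: g'_def)
            then show ?thesis using lt[of i] hs d by (simp add: g'_def nth_append)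
          qed
        qed
        show "hs!0 \<ge> 7" using hs d by (cases xs) (auto simp: g'_def nth_append)
        show "hs!(length hs - 1) = d + length hs + 1" using hs by (simp add: g'_def nth_append)
      qed
    qed
  qed
  then show ?thesis by (rule bij_betw_same_card)
qed

lemma card_lt_Suc:
  assumes "finite X"
  shows "card {x\<in>X. x < Suc i} = card {x\<in>X. x < i} + (if i \<in> X then 1 else 0)"
proof (cases "i \<in> X")
  case True
  then have "{x\<in>X. x < Suc i} = insert i {x\<in>X. x < i}" by auto
  then show ?thesis using True assms by simp
next
  case False
  then have "{x\<in>X. x < Suc i} = {x\<in>X. x < i}" using less_Suc_eq by auto
  then show ?thesis using False by simp
qed

definition Aset :: "nat \<Rightarrow> nat list set" where
  "Aset n = {s :: nat list. length s = n \<and> s ! 0 = 1 \<and>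
     (\<forall>i. Suc i < n \<longrightarrow> s ! Suc i - s ! i \<in> {1, 2}) \<and>
     (\<forall>i j. i < j \<and> Suc j < n \<and> s ! Suc i - s ! i = 2 \<and> s ! Suc j - s ! j = 2
        \<longrightarrow> s ! j - s ! i \<ge> 6)}"

lemma alpha_Aset: "alpha n = card (Aset n)"
  unfolding alpha_def Aset_def by simp

lemma A_formula:
  assumes s: "s \<in> Aset n"
  defines "X \<equiv> {i. i < n - 1 \<and> s!Suc i - s!i = 2}"
  shows "i < n \<Longrightarrow> s!i = 1 + i + card {x\<in>X. x < i}"
proof (induction i)
  case 0
  then show ?case using s by (simp add: Aset_def)
next
  case (Suc i)
  have fin: "finite X" unfolding X_def by simp
  have st: "s!Suc i - s!i \<in> {1,2}" using s Suc.prems by (simp add: Aset_def)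
  have iX: "i \<in> X \<longleftrightarrow> s!Suc i - s!i = 2" using Suc.prems unfolding X_def by auto
  have "s!i = 1 + i + card {x\<in>X. x < i}" using Suc by simp
  then show ?case using st iX card_lt_Suc[OF fin, of i] by auto
qed

lemma alpha_card:
  assumes n: "n \<ge> 1"
  shows "alpha n = card (Q (n-1))"
proof -
  define c where "c xs = map (\<lambda>i. 1 + i + card {x\<in>set xs. x < i}) [0..<n]" for xs :: "nat list"
  define f where "f s = filter (\<lambda>i. s!Suc i - s!i = 2) [0..<n-1]" for s :: "nat list"
  have cstep: "c xs!Suc i - c xs!i = (if i \<in> set xs then 2 else 1)" if "Suc i < n" for xs i
    using that card_lt_Suc[of "set xs" i] by (simp add: c_def)
  have setf: "set (f s) = {i. i < n - 1 \<and> s!Suc i - s!i = 2}" for s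
    by (auto simp: f_def)
  have sortedf: "sorted_wrt (<) (f s)" for s
    unfolding f_def by (rule sorted_wrt_filter) simp
  have "bij_betw f (Aset n) (Q (n-1))"
  proof (rule bij_betw_byWitness[where f'=c])
    show "\<forall>a\<in>Aset n. c (f a) = a"
    proof
      fix s assume s: "s \<in> Aset n"
      show "c (f s) = s"
      proof (rule nth_equalityI)
        show "length (c (f s)) = length s" using s by (simp add: c_def Aset_def)
        fix i assume "i < length (c (f s))"
        then have "i < n" by (simp add: c_def)
        then show "c (f s) ! i = s ! i" using A_formula[OF s \<open>i<n\<close>] setf[of s]
          by (simp add: c_def)
      qed
    qed
    show "\<forall>a\<in>Q (n-1). f (c a) = a"
    proof
      fix xs assume xs: "xs \<in> Q (n-1)"
      have "f (c xs) = filter (\<lambda>i. i \<in> set xs) [0..<n-1]"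
        unfolding f_def using cstep by (intro filter_cong) auto
      also have "\<dots> = xs"
      proof (rule sorted_distinct_set_unique)
        have "sorted_wrt (<) xs" using xs unfolding Q_def
          by (auto elim: sorted_wrt_mono_rel[rotated])
        then show "sorted xs" "distinct xs" by (auto simp: strict_sorted_iff)
        show "sorted (filter (\<lambda>i. i \<in> set xs) [0..<n - 1])" using sorted_wrt_filter[of "(\<le>)" "[0..<n - 1]"] by (simp add: sorted_upt)
        show "distinct (filter (\<lambda>i. i \<in> set xs) [0..<n - 1])" by simp
        show "set (filter (\<lambda>i. i \<in> set xs) [0..<n - 1]) = set xs" using xs by (auto simp: Q_def)
      qed
      finally show "f (c xs) = xs" .
    qed
    show "f ` Aset n \<subseteq> Q (n-1)"
    proof
      fix ys assume "ys \<in> f ` Aset n"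
      then obtain s where s: "s \<in> Aset n" and ys: "ys = f s" by auto
      define X where "X = {i. i < n - 1 \<and> s!Suc i - s!i = 2}"
      have fin: "finite X" unfolding X_def by simp
      have key: "i + 5 \<le> j" if "i \<in> X" "j \<in> X" "i < j" for i j
      proof -
        define j' where "j' = (LEAST x. x \<in> X \<and> i < x)"
        have j'1: "j' \<in> X \<and> i < j'" unfolding j'_def by (rule LeastI[of _ j]) (use that in auto)
        have j'2: "j' \<le> j" unfolding j'_def by (rule Least_le) (use that in auto)
        have noX: "x \<notin> X" if "i < x" "x < j'" for x
          using that not_less_Least[of x "\<lambda>x. x \<in> X \<and> i < x"] unfolding j'_def by auto
        have "{x\<in>X. x < j'} = insert i {x\<in>X. x < i}"
          using j'1 \<open>i \<in> X\<close> noX by (auto, meson linorder_neqE_nat)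
        then have cj: "card {x\<in>X. x < j'} = card {x\<in>X. x < i} + 1" using fin by simp
        have jn: "j' < n" "i < n" using j'1 \<open>i\<in>X\<close> unfolding X_def by auto
        have fj: "s!j' = 1 + j' + card {x\<in>X. x < j'}" using A_formula[OF s jn(1)] X_def by simp
        have fi: "s!i = 1 + i + card {x\<in>X. x < i}" using A_formula[OF s jn(2)] X_def by simp
        have "s!j' - s!i \<ge> 6" using s j'1 \<open>i\<in>X\<close> unfolding Aset_def X_def by auto
        then show ?thesis using fj fi cj j'1 j'2 by simp
      qed
      have "sorted_wrt (\<lambda>x y. x + 5 \<le> y) ys"
        unfolding sorted_wrt_iff_nth_less
      proof (intro allI impI)
        fix p q assume pq: "p < q" "q < length ys"
        have "ys!p < ys!q" using sortedf[of s] pq ys by (simp add: sorted_wrt_iff_nth_less)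
        moreover have "ys!p \<in> X" "ys!q \<in> X" using pq ys setf[of s] X_def nth_mem by auto
        ultimately show "ys!p + 5 \<le> ys!q" using key by blast
      qed
      moreover have "\<forall>x\<in>set ys. x < n - 1" using ys setf by auto
      ultimately show "ys \<in> Q (n-1)" by (simp add: Q_def)
    qed
    show "c ` Q (n-1) \<subseteq> Aset n"
    proof
      fix s assume "s \<in> c ` Q (n-1)"
      then obtain xs where xs: "xs \<in> Q (n-1)" and s: "s = c xs" by auto
      have pw: "i + 5 \<le> j" if hij: "i \<in> set xs" "j \<in> set xs" "i < j" for i j
      proof -
        obtain p q where p: "p < length xs" "xs!p = i" and q: "q < length xs" "xs!q = j"
          using hij(1,2) by (metis in_set_conv_nth)
        have sw: "sorted_wrt (\<lambda>x y. x + 5 \<le> y) xs" using xs by (simp add: Q_def)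
        show ?thesis
        proof (cases p q rule: linorder_cases)
          case less then show ?thesis using sorted_wrt_nth_less[OF sw less q(1)] p q by simp
        next
          case equal then show ?thesis using p q that by simp
        next
          case greater then show ?thesis using sorted_wrt_nth_less[OF sw greater p(1)] p q that by simp
        qed
      qed
      have "length s = n" using s by (simp add: c_def)
      moreover have "s!0 = 1" using s n by (simp add: c_def)
      moreover have "\<forall>i. Suc i < n \<longrightarrow> s ! Suc i - s ! i \<in> {1, 2}" using s cstep by simp
      moreover have "\<forall>i j. i < j \<and> Suc j < n \<and> s ! Suc i - s ! i = 2 \<and> s ! Suc j - s ! j = 2
        \<longrightarrow> s ! j - s ! i \<ge> 6"
      proof (intro allI impI)
        fix i j assume h: "i < j \<and> Suc j < n \<and> s ! Suc i - s ! i = 2 \<and> s ! Suc j - s ! j = 2"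
        then have ij: "i \<in> set xs" "j \<in> set xs" using s cstep[of i xs] cstep[of j xs]
          by (auto split: if_splits)
        have "{x\<in>set xs. x < i} \<subset> {x\<in>set xs. x < j}" using ij h by auto
        then have "card {x\<in>set xs. x < i} < card {x\<in>set xs. x < j}"
          by (rule psubset_card_mono[rotated]) simp
        moreover have "i + 5 \<le> j" using pw ij h by blast
        ultimately show "s ! j - s ! i \<ge> 6" using s h by (simp add: c_def)
      qed
      ultimately show "s \<in> Aset n" by (simp add: Aset_def)
    qed
  qed
  then show ?thesis unfolding alpha_Aset by (rule bij_betw_same_card)
qed

theorem proposition7p1:
  fixes d :: nat
  assumes "d \<ge> 46"
  shows "card (admissible_seqs d) = alpha (d - 8)"
proof -
  have "alpha (d-8) = card (Q (d-8-1))" using assms by (intro alpha_card) simp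
  moreover have "d - 8 - 1 = d - 9" by simp
  ultimately show ?thesis using adm_card[of d] assms by simp
qed

end
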